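(* Let $\gamma,\tau,m$ be integers with $\gamma\ge0$, $\tau\in\{0,1,\dots,\gamma\}$ and $m\ge2\gamma+1$. Then $$\overline{\mathfrak{C}}_{\gamma,\gamma,2\tau}=2\sqrt{\frac2\pi}\frac{(\tau+1)^2(\gamma-\tau+1)(\gamma+\tau+3)}{(\gamma+1)(\gamma+3)\sqrt{4\tau(\tau+2)+3}},\qquad \overline{\mathfrak{C}}_{m,2\tau,m}=2\sqrt{\frac2\pi}\frac{(\tau+1)^2(m-\tau+1)(m+\tau+3)}{(m+1)(m+3)\sqrt{4\tau(\tau+2)+3}},$$ $$\overline{\mathfrak{C}}_{\gamma,2\tau+m-\gamma,m}=2\sqrt{\frac2\pi}\frac{(\tau+1)(\gamma-\tau+1)(m+\tau+3)(-\gamma+m+\tau+1)}{\sqrt{(\gamma+1)(\gamma+3)(m+1)(m+3)(-\gamma+m+2\tau+1)(-\gamma+m+2\tau+3)}}.$$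
   Context: $\mathfrak{e}_n(x)=\mathfrak{N}_nP_n^{(3/2,3/2)}(\cos x)$ with $P_n^{(3/2,3/2)}$ the Jacobi polynomial and $\mathfrak{N}_n=\frac{\sqrt{(n+2)\Gamma(1+n)\Gamma(4+n)}}{2\sqrt2\,\Gamma(5/2+n)}$. $\overline{\mathfrak{C}}_{ijm}=\int_0^\pi\mathfrak{e}_i\mathfrak{e}_j\mathfrak{e}_m\sin^4x\,dx$. *)

theory Defs
  imports "HOL-Analysis.Analysis"
begin

definition jacobiP :: "nat \<Rightarrow> real \<Rightarrow> real \<Rightarrow> real \<Rightarrow> real" where
  "jacobiP n a b x =
     (\<Sum>s\<le>n. ((real n + a) gchoose (n - s)) * ((real n + b) gchoose s)
              * ((x - 1) / 2) ^ s * ((x + 1) / 2) ^ (n - s))"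

definition frakN :: "nat \<Rightarrow> real" where
  "frakN n = sqrt ((real n + 2) * Gamma (1 + real n) * Gamma (4 + real n))
             / (2 * sqrt 2 * Gamma (5/2 + real n))"

definition frake :: "nat \<Rightarrow> real \<Rightarrow> real" where
  "frake n x = frakN n * jacobiP n (3/2) (3/2) (cos x)"

definition Cbar :: "nat \<Rightarrow> nat \<Rightarrow> nat \<Rightarrow> real" where
  "Cbar i j m = integral {0..pi} (\<lambda>x. frake i x * frake j x * frake m x * sin x ^ 4)"

end

theory Submission
  imports Defs
begin


definition GG :: "nat \<Rightarrow> real \<Rightarrow> real" where
  "GG n t = (\<Sum>l\<le>n. (real l + 1) * (real n - real l + 1) * cos ((real n - 2 * real l) * t))"
definition UU :: "nat \<Rightarrow> real \<Rightarrow> real" where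
  "UU n t = (\<Sum>l\<le>n. cos ((real n - 2 * real l) * t))"
definition hh :: "nat \<Rightarrow> real \<Rightarrow> real" where
  "hh n t = (real n + 3) * sin ((real n + 1) * t) - (real n + 1) * sin ((real n + 3) * t)"

lemma GG_rec: "GG (Suc (Suc n)) t = GG n t + (real n + 3) * UU (Suc (Suc n)) t"
proof -
  let ?f = "\<lambda>l. (real l + 1) * (real (Suc (Suc n)) - real l + 1) * cos ((real (Suc (Suc n)) - 2 * real l) * t)"
  let ?u = "\<lambda>l. cos ((real (Suc (Suc n)) - 2 * real l) * t)"
  have e1: "GG (Suc (Suc n)) t = ?f 0 + (\<Sum>l\<le>n. ?f (Suc l)) + ?f (Suc (Suc n))"
    unfolding GG_def by (subst sum.atMost_Suc, subst sum.atMost_Suc_shift, rule refl)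
  have e2: "UU (Suc (Suc n)) t = ?u 0 + (\<Sum>l\<le>n. ?u (Suc l)) + ?u (Suc (Suc n))"
    unfolding UU_def by (subst sum.atMost_Suc, subst sum.atMost_Suc_shift, rule refl)
  have e3: "?f (Suc l) = (real l + 1) * (real n - real l + 1) * cos ((real n - 2 * real l) * t) + (real n + 3) * ?u (Suc l)" for l
  proof -
    have "(real (Suc (Suc n)) - 2 * real (Suc l)) * t = (real n - 2 * real l) * t" by (simp add: algebra_simps)
    then show ?thesis by (simp add: algebra_simps)
  qed
  have "(\<Sum>l\<le>n. ?f (Suc l)) = GG n t + (real n + 3) * (\<Sum>l\<le>n. ?u (Suc l))"
    unfolding GG_def e3 sum.distrib sum_distrib_left ..
  moreover have "?f 0 = (real n + 3) * ?u 0" by simp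
  moreover have "?f (Suc (Suc n)) = (real n + 3) * ?u (Suc (Suc n))" by (simp add: algebra_simps)
  ultimately show ?thesis using e1 e2 by (simp add: algebra_simps)
qed

lemma UU_rec: "UU (Suc (Suc n)) t = UU n t + 2 * cos ((real n + 2) * t)"
proof -
  let ?u = "\<lambda>l. cos ((real (Suc (Suc n)) - 2 * real l) * t)"
  have e2: "UU (Suc (Suc n)) t = ?u 0 + (\<Sum>l\<le>n. ?u (Suc l)) + ?u (Suc (Suc n))"
    unfolding UU_def by (subst sum.atMost_Suc, subst sum.atMost_Suc_shift, rule refl)
  have e3: "?u (Suc l) = cos ((real n - 2 * real l) * t)" for l
  proof -
    have "(real (Suc (Suc n)) - 2 * real (Suc l)) * t = (real n - 2 * real l) * t" by (simp add: algebra_simps)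
    then show ?thesis by simp
  qed
  have "?u (Suc (Suc n)) = cos ((real n + 2) * t)"
  proof -
    have "(real (Suc (Suc n)) - 2 * real (Suc (Suc n))) * t = - ((real n + 2) * t)" by (simp add: algebra_simps)
    then show ?thesis by (simp only: cos_minus)
  qed
  moreover have "?u 0 = cos ((real n + 2) * t)" by (simp add: add.commute)
  ultimately show ?thesis using e2 unfolding e3 UU_def by simp
qed

lemma UU_sin: "UU n t * sin t = sin ((real n + 1) * t)"
proof (induction n rule: nat_less_induct)
  case (1 n)
  show ?case
  proof (cases n)
    case 0 then show ?thesis by (simp add: UU_def)
  next
    case (Suc m) note m = this
    show ?thesis
    proof (cases m)
      case 0
      have "sin (2 * t) = 2 * sin t * cos t" by (rule sin_double)
      then show ?thesis using m 0 by (simp add: UU_def algebra_simps)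
    next
      case (Suc k)
      have ih: "UU k t * sin t = sin ((real k + 1) * t)" using 1 m Suc by simp
      have a: "sin ((real k + 3) * t) = sin ((real k + 2) * t + t)" by (simp add: algebra_simps)
      have b: "sin ((real k + 1) * t) = sin ((real k + 2) * t - t)" by (simp add: algebra_simps)
      have "UU n t * sin t = sin ((real k + 1) * t) + 2 * cos ((real k + 2) * t) * sin t"
        using m Suc UU_rec[of k t] ih by (simp add: algebra_simps)
      also have "\<dots> = sin ((real k + 3) * t)" unfolding a b sin_add sin_diff by simp
      finally show ?thesis using m Suc by (simp add: algebra_simps)
    qed
  qed
qed

lemma GG_0: "GG 0 t = 1" by (simp add: GG_def)
lemma GG_1: "GG (Suc 0) t = 4 * cos t" by (simp add: GG_def)

lemma GG_sin_rec: "GG (Suc (Suc n)) t * sin t = GG n t * sin t + (real n + 3) * sin ((real n + 3) * t)"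
proof -
  have "UU (Suc (Suc n)) t * sin t = sin ((real n + 3) * t)" using UU_sin[of "Suc (Suc n)" t] by (simp add: algebra_simps)
  then show ?thesis using GG_rec[of n t] by (simp add: algebra_simps)
qed

lemma hh_rec: "hh (Suc (Suc n)) t = hh n t + 4 * (real n + 3) * sin ((real n + 3) * t) * (sin t)^2"
proof -
  let ?x = "(real n + 3) * t"
  have a: "sin ((real n + 5) * t) = sin (?x + 2 * t)" by (simp add: algebra_simps)
  have b: "sin ((real n + 1) * t) = sin (?x - 2 * t)" by (simp add: algebra_simps)
  have c: "cos (2 * t) = 1 - 2 * (sin t)^2" by (simp add: cos_double_sin)
  have "hh (Suc (Suc n)) t = (real n + 5) * sin ?x - (real n + 3) * sin ((real n + 5) * t)"
    by (simp add: hh_def algebra_simps)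
  moreover have "hh n t = (real n + 3) * sin ((real n + 1) * t) - (real n + 1) * sin ?x"
    by (simp add: hh_def)
  ultimately show ?thesis unfolding a b sin_add sin_diff c by (simp add: algebra_simps)
qed

lemma GG_hh: "4 * (sin t)^3 * GG n t = hh n t"
proof (induction n rule: nat_less_induct)
  case (1 n)
  show ?case
  proof (cases n)
    case 0
    have "sin (3 * t) = sin (2 * t + t)" by simp
    also have "\<dots> = 3 * sin t - 4 * (sin t)^3"
      unfolding sin_add sin_double cos_double_sin using sin_cos_squared_add[of t] by algebra
    finally show ?thesis using 0 by (simp add: hh_def GG_0)
  next
    case (Suc m) note m = this
    show ?thesis
    proof (cases m)
      case 0
      have "sin (4 * t) = 2 * sin (2 * t) * cos (2 * t)" using sin_double[of "2*t"] by simp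
      then have "hh 1 t = 4 * sin (2 * t) - 2 * (2 * sin (2 * t) * cos (2 * t))" by (simp add: hh_def)
      also have "\<dots> = 16 * (sin t)^3 * cos t"
        unfolding sin_double cos_double_sin by (simp add: algebra_simps power2_eq_square power3_eq_cube)
      finally show ?thesis using m 0 by (simp add: GG_1)
    next
      case (Suc k)
      have ih: "4 * (sin t)^3 * GG k t = hh k t" using 1 m Suc by simp
      have "4 * (sin t)^3 * GG n t = 4 * (sin t)^2 * (GG (Suc (Suc k)) t * sin t)"
        using m Suc by (simp add: power2_eq_square power3_eq_cube)
      also have "\<dots> = 4 * (sin t)^3 * GG k t + 4 * (real k + 3) * sin ((real k + 3) * t) * (sin t)^2"
        unfolding GG_sin_rec by (simp add: algebra_simps power2_eq_square power3_eq_cube)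
      also have "\<dots> = hh n t" using ih hh_rec[of k t] m Suc by simp
      finally show ?thesis .
    qed
  qed
qed

lemma cos_int_integral:
  fixes c :: int
  shows "((\<lambda>t. cos (of_int c * t)) has_integral (if c = 0 then pi else 0)) {0..pi}"
proof (cases "c = 0")
  case True then show ?thesis using has_integral_const_real[of "1::real" 0 pi] by simp
next
  case False
  have d: "((\<lambda>t. sin (of_int c * t) / of_int c) has_vector_derivative cos (of_int c * t)) (at t within {0..pi})" for t
    using False by (auto intro!: derivative_eq_intros simp: has_real_derivative_iff_has_vector_derivative[symmetric])
  have "((\<lambda>t. cos (of_int c * t)) has_integral (sin (of_int c * pi) / of_int c - sin (of_int c * 0) / of_int c)) {0..pi}"
    by (rule fundamental_theorem_of_calculus) (auto intro: d)
  moreover have "sin (of_int c * pi) = 0" by (simp add: sin_zero_iff_int2)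
  ultimately show ?thesis using False by simp
qed

lemma sin_sin_integral:
  fixes q r :: nat
  assumes "q > 0" "r > 0"
  shows "((\<lambda>t. sin (real q * t) * sin (real r * t)) has_integral (if q = r then pi / 2 else 0)) {0..pi}"
proof -
  have e: "sin (real q * t) * sin (real r * t) = cos (of_int (int q - int r) * t) / 2 - cos (of_int (int q + int r) * t) / 2" for t
  proof -
    have "cos (of_int (int q - int r) * t) = cos (real q * t - real r * t)" by (simp add: algebra_simps)
    moreover have "cos (of_int (int q + int r) * t) = cos (real q * t + real r * t)" by (simp add: algebra_simps)
    ultimately show ?thesis by (simp add: cos_diff cos_add field_simps)
  qed
  have i1: "((\<lambda>t. cos (of_int (int q - int r) * t) / 2) has_integral (if q = r then pi else 0) / 2) {0..pi}"
    using has_integral_divide[OF cos_int_integral[of "int q - int r"], of 2] by (simp add: if_distrib)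
  have i2: "((\<lambda>t. cos (of_int (int q + int r) * t) / 2) has_integral 0) {0..pi}"
    using has_integral_divide[OF cos_int_integral[of "int q + int r"], of 2] assms by simp
  from has_integral_diff[OF i1 i2] show ?thesis unfolding e by (simp split: if_splits)
qed

lemma Phi_integral:
  fixes q :: nat
  assumes "q > 0"
  shows "((\<lambda>t. sin (real q * t) * (GG p t * sin t)) has_integral
            (if q \<le> p + 1 \<and> even (p + 1 - q) then pi / 2 * real q else 0)) {0..pi}"
proof (induction p rule: nat_less_induct)
  case (1 p)
  show ?case
  proof (cases p)
    case 0
    have "((\<lambda>t. sin (real q * t) * sin (real 1 * t)) has_integral (if q = 1 then pi / 2 else 0)) {0..pi}"
      by (rule sin_sin_integral) (use assms in auto)
    moreover have "(q \<le> 0 + 1 \<and> even (0 + 1 - q)) = (q = 1)" using assms by auto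
    ultimately show ?thesis using 0 by (auto simp: GG_0)
  next
    case (Suc m) note m = this
    show ?thesis
    proof (cases m)
      case 0
      have "((\<lambda>t. sin (real q * t) * sin (real 2 * t)) has_integral (if q = 2 then pi / 2 else 0)) {0..pi}"
        by (rule sin_sin_integral) (use assms in auto)
      from has_integral_mult_right[OF this, of 2]
      have "((\<lambda>t. 2 * (sin (real q * t) * sin (real 2 * t))) has_integral (if q = 2 then pi / 2 * real q else 0)) {0..pi}"
        by (cases "q = 2") auto
      note X = this
      have fe: "(\<lambda>t. sin (real q * t) * (GG 1 t * sin t)) = (\<lambda>t. 2 * (sin (real q * t) * sin (real 2 * t)))"
        by (rule ext) (simp add: GG_1 sin_double)
      have cond: "(q \<le> 1 + 1 \<and> even (1 + 1 - q)) = (q = 2)" using assms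
        by (cases q; cases "q - 1"; auto)
      have p1: "p = 1" using m 0 by simp
      show ?thesis unfolding p1 fe cond by (rule X)
    next
      case (Suc k)
      have ih: "((\<lambda>t. sin (real q * t) * (GG k t * sin t)) has_integral
            (if q \<le> k + 1 \<and> even (k + 1 - q) then pi / 2 * real q else 0)) {0..pi}"
        using 1 m Suc by simp
      have "((\<lambda>t. sin (real q * t) * sin (real (k + 3) * t)) has_integral (if q = k + 3 then pi / 2 else 0)) {0..pi}"
        by (rule sin_sin_integral) (use assms in auto)
      from has_integral_mult_right[OF this, of "real k + 3"]
      have i2: "((\<lambda>t. (real k + 3) * (sin (real q * t) * sin ((real k + 3) * t))) has_integral
          ((real k + 3) * (if q = k + 3 then pi / 2 else 0))) {0..pi}"
        by (simp add: add.commute)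
      have e: "sin (real q * t) * (GG p t * sin t) = sin (real q * t) * (GG k t * sin t) + (real k + 3) * (sin (real q * t) * sin ((real k + 3) * t))" for t
        using m Suc GG_sin_rec[of k t] by (simp add: algebra_simps)
      have c: "(if q \<le> p + 1 \<and> even (p + 1 - q) then pi / 2 * real q else 0) =
           (if q \<le> k + 1 \<and> even (k + 1 - q) then pi / 2 * real q else 0) + (real k + 3) * (if q = k + 3 then pi / 2 else 0)"
      proof -
        have "(q \<le> p + 1 \<and> even (p + 1 - q)) = ((q \<le> k + 1 \<and> even (k + 1 - q)) \<or> q = k + 3)"
          using m Suc by (cases "q = k + 2") (auto simp: Suc_diff_le)
        moreover have "\<not> ((q \<le> k + 1 \<and> even (k + 1 - q)) \<and> q = k + 3)" by auto
        ultimately show ?thesis by (cases "q = k + 3") auto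
      qed
      show ?thesis unfolding e c by (rule has_integral_add[OF ih i2])
    qed
  qed
qed

definition RR :: "nat \<Rightarrow> nat \<Rightarrow> nat \<Rightarrow> real" where
  "RR i j k = (real k + 1) * (real i - real k + 1) * (real j - real k + 1) * (real i + real j - real k + 3)"

definition cc :: "nat \<Rightarrow> nat \<Rightarrow> real" where
  "cc i l = (real l + 1) * (real i - real l + 1)"

lemma T1_sum:
  assumes "k \<le> i"
  shows "(\<Sum>l\<le>i. if k \<le> l then cc i l * (real j + 3) * (real i + real j + 1 - 2 * real l) else 0)
       - (\<Sum>l\<le>i. if k < l then cc i l * (real j + 1) * (real i + real j + 3 - 2 * real l) else 0) = RR i j k"
  using assms
proof (induction k rule: inc_induct)
  case base
  have a: "(\<Sum>l\<le>i. if i \<le> l then cc i l * (real j + 3) * (real i + real j + 1 - 2 * real l) else 0)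
        = (\<Sum>l\<le>i. if l = i then cc i l * (real j + 3) * (real i + real j + 1 - 2 * real l) else 0)"
    by (rule sum.cong) auto
  have b: "(\<Sum>l\<le>i. if i < l then cc i l * (real j + 1) * (real i + real j + 3 - 2 * real l) else 0) = 0"
    by (rule sum.neutral) auto
  show ?case unfolding a b by (simp add: cc_def RR_def algebra_simps)
next
  case (step n)
  let ?A = "\<lambda>l. cc i l * (real j + 3) * (real i + real j + 1 - 2 * real l)"
  let ?B = "\<lambda>l. cc i l * (real j + 1) * (real i + real j + 3 - 2 * real l)"
  have a: "(\<Sum>l\<le>i. if n \<le> l then ?A l else 0) = ?A n + (\<Sum>l\<le>i. if Suc n \<le> l then ?A l else 0)"
  proof -
    have "(\<Sum>l\<le>i. if n \<le> l then ?A l else 0) = (\<Sum>l\<le>i. (if l = n then ?A l else 0) + (if Suc n \<le> l then ?A l else 0))"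
      by (rule sum.cong) auto
    also have "\<dots> = ?A n + (\<Sum>l\<le>i. if Suc n \<le> l then ?A l else 0)"
      unfolding sum.distrib using step(2) by simp
    finally show ?thesis .
  qed
  have b: "(\<Sum>l\<le>i. if n < l then ?B l else 0) = ?B (Suc n) + (\<Sum>l\<le>i. if Suc n < l then ?B l else 0)"
  proof -
    have "(\<Sum>l\<le>i. if n < l then ?B l else 0) = (\<Sum>l\<le>i. (if l = Suc n then ?B l else 0) + (if Suc n < l then ?B l else 0))"
      by (rule sum.cong) auto
    also have "\<dots> = ?B (Suc n) + (\<Sum>l\<le>i. if Suc n < l then ?B l else 0)"
      unfolding sum.distrib using step(2) by simp
    finally show ?thesis .
  qed
  have "RR i j n = ?A n - ?B (Suc n) + RR i j (Suc n)"
    by (simp add: cc_def RR_def algebra_simps)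
  then show ?case using step(3) unfolding a b by simp
qed

lemma T2_sum:
  assumes "k \<le> i"
  shows "(\<Sum>l\<le>i. if l \<le> i - k then cc i l * (real j + 3) * (real j + 1 - real i + 2 * real l) else 0)
       - (\<Sum>l\<le>i. if l < i - k then cc i l * (real j + 1) * (real j + 3 - real i + 2 * real l) else 0) = RR i j k"
  using assms
proof (induction k rule: inc_induct)
  case base
  have a: "(\<Sum>l\<le>i. if l \<le> i - i then cc i l * (real j + 3) * (real j + 1 - real i + 2 * real l) else 0)
        = (\<Sum>l\<le>i. if l = 0 then cc i l * (real j + 3) * (real j + 1 - real i + 2 * real l) else 0)"
    by (rule sum.cong) auto
  have b: "(\<Sum>l\<le>i. if l < i - i then cc i l * (real j + 1) * (real j + 3 - real i + 2 * real l) else 0) = 0"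
    by (rule sum.neutral) auto
  show ?case unfolding a b by (simp add: cc_def RR_def algebra_simps)
next
  case (step n)
  let ?A = "\<lambda>l. cc i l * (real j + 3) * (real j + 1 - real i + 2 * real l)"
  let ?B = "\<lambda>l. cc i l * (real j + 1) * (real j + 3 - real i + 2 * real l)"
  have a: "(\<Sum>l\<le>i. if l \<le> i - n then ?A l else 0) = ?A (i - n) + (\<Sum>l\<le>i. if l \<le> i - Suc n then ?A l else 0)"
  proof -
    have "(\<Sum>l\<le>i. if l \<le> i - n then ?A l else 0) = (\<Sum>l\<le>i. (if l = i - n then ?A l else 0) + (if l \<le> i - Suc n then ?A l else 0))"
      by (rule sum.cong) (use step(2) in auto)
    also have "\<dots> = ?A (i - n) + (\<Sum>l\<le>i. if l \<le> i - Suc n then ?A l else 0)"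
      unfolding sum.distrib using step(2) by simp
    finally show ?thesis .
  qed
  have b: "(\<Sum>l\<le>i. if l < i - n then ?B l else 0) = ?B (i - Suc n) + (\<Sum>l\<le>i. if l < i - Suc n then ?B l else 0)"
  proof -
    have "(\<Sum>l\<le>i. if l < i - n then ?B l else 0) = (\<Sum>l\<le>i. (if l = i - Suc n then ?B l else 0) + (if l < i - Suc n then ?B l else 0))"
      by (rule sum.cong) (use step(2) in auto)
    also have "\<dots> = ?B (i - Suc n) + (\<Sum>l\<le>i. if l < i - Suc n then ?B l else 0)"
      unfolding sum.distrib using step(2) by simp
    finally show ?thesis .
  qed
  have r1: "real (i - n) = real i - real n" using step(2) by simp
  have r2: "real (i - Suc n) = real i - real n - 1" using step(2) by simp
  have "RR i j n = ?A (i - n) - ?B (i - Suc n) + RR i j (Suc n)"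
    by (simp add: cc_def RR_def r1 r2 algebra_simps)
  then show ?case using step(3) unfolding a b by simp
qed

lemma cos_hh:
  fixes a b1 b3 :: real
  assumes "b1 = real j + 1" "b3 = real j + 3"
  shows "cos (a * t) * hh j t = (real j + 3) / 2 * (sin ((b1 + a) * t) + sin ((b1 - a) * t))
                                - (real j + 1) / 2 * (sin ((b3 + a) * t) + sin ((b3 - a) * t))"
proof -
  have h: "hh j t = (real j + 3) * sin (b1 * t) - (real j + 1) * sin (b3 * t)"
    using assms by (simp add: hh_def)
  have e1: "sin ((b1 + a) * t) = sin (b1 * t + a * t)" and e2: "sin ((b1 - a) * t) = sin (b1 * t - a * t)"
   and e3: "sin ((b3 + a) * t) = sin (b3 * t + a * t)" and e4: "sin ((b3 - a) * t) = sin (b3 * t - a * t)"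
    by (simp_all add: algebra_simps)
  show ?thesis unfolding h e1 e2 e3 e4 sin_add sin_diff
    by (simp add: field_simps)
qed

lemma main_integral:
  assumes ij: "i \<le> j" and ki: "k \<le> i"
  shows "((\<lambda>t. GG i t * GG j t * GG (i + j - 2 * k) t * (sin t)^4) has_integral (pi / 8 * RR i j k)) {0..pi}"
proof -
  define p where "p = i + j - 2 * k"
  define S where "S q t = sin (real q * t) * (GG p t * sin t)" for q :: nat and t
  define Ph where "Ph q = (if q \<le> p + 1 \<and> even (p + 1 - q) then pi / 2 * real q else 0)" for q :: nat
  have PhI: "(S q has_integral Ph q) {0..pi}" if "q > 0" for q
    unfolding S_def Ph_def using Phi_integral[OF that, of p] .
  define q1 where "q1 l = i + j + 1 - 2 * l" for l :: nat
  define q2 where "q2 l = j + 1 + 2 * l - i" for l :: nat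
  define q3 where "q3 l = i + j + 3 - 2 * l" for l :: nat
  define q4 where "q4 l = j + 3 + 2 * l - i" for l :: nat
  define f where "f l t = cc i l / 8 * ((real j + 3) * (S (q1 l) t + S (q2 l) t) - (real j + 1) * (S (q3 l) t + S (q4 l) t))" for l t
  define v where "v l = cc i l / 8 * ((real j + 3) * (Ph (q1 l) + Ph (q2 l)) - (real j + 1) * (Ph (q3 l) + Ph (q4 l)))" for l
  have fI: "(f l has_integral v l) {0..pi}" if "l \<le> i" for l
  proof -
    have pos: "q1 l > 0" "q2 l > 0" "q3 l > 0" "q4 l > 0" using that ij by (auto simp: q1_def q2_def q3_def q4_def)
    show ?thesis unfolding f_def v_def
      by (intro has_integral_mult_right has_integral_diff has_integral_add PhI pos)
  qed
  have sumI: "((\<lambda>t. \<Sum>l\<le>i. f l t) has_integral (\<Sum>l\<le>i. v l)) {0..pi}"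
    by (rule has_integral_sum) (auto intro: fI)
  have feq: "GG i t * GG j t * GG p t * (sin t)^4 = (\<Sum>l\<le>i. f l t)" for t
  proof -
    have h: "GG j t * (sin t)^3 = hh j t / 4" using GG_hh[of t j] by (simp add: algebra_simps)
    have "GG i t * GG j t * GG p t * (sin t)^4 = GG i t * (hh j t / 4) * (GG p t * sin t)"
      unfolding h[symmetric] by (simp add: algebra_simps power3_eq_cube power4_eq_xxxx)
    also have "\<dots> = (\<Sum>l\<le>i. cc i l * cos ((real i - 2 * real l) * t) * (hh j t / 4) * (GG p t * sin t))"
      unfolding GG_def cc_def sum_distrib_right ..
    also have "\<dots> = (\<Sum>l\<le>i. f l t)"
    proof (rule sum.cong[OF refl])
      fix l assume "l \<in> {..i}"
      then have li: "l \<le> i" by simp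
      have r1: "real (q1 l) = (real j + 1) + (real i - 2 * real l)" using li ij unfolding q1_def by (subst of_nat_diff) auto
      have r2: "real (q2 l) = (real j + 1) - (real i - 2 * real l)" using li ij unfolding q2_def by (subst of_nat_diff) auto
      have r3: "real (q3 l) = (real j + 3) + (real i - 2 * real l)" using li ij unfolding q3_def by (subst of_nat_diff) auto
      have r4: "real (q4 l) = (real j + 3) - (real i - 2 * real l)" using li ij unfolding q4_def by (subst of_nat_diff) auto
      have "cos ((real i - 2 * real l) * t) * hh j t =
          (real j + 3) / 2 * (sin (real (q1 l) * t) + sin (real (q2 l) * t))
        - (real j + 1) / 2 * (sin (real (q3 l) * t) + sin (real (q4 l) * t))"
        unfolding r1 r2 r3 r4 by (rule cos_hh) auto
      note E = this
      have "cc i l * cos ((real i - 2 * real l) * t) * (hh j t / 4) * (GG p t * sin t)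
          = cc i l / 4 * (GG p t * sin t) * (cos ((real i - 2 * real l) * t) * hh j t)"
        by (simp add: algebra_simps)
      also have "\<dots> = cc i l / 4 * (GG p t * sin t) * ((real j + 3) / 2 * (sin (real (q1 l) * t) + sin (real (q2 l) * t))
        - (real j + 1) / 2 * (sin (real (q3 l) * t) + sin (real (q4 l) * t)))"
        unfolding E ..
      also have "\<dots> = f l t"
        unfolding f_def S_def by (simp add: field_simps)
      finally show "cc i l * cos ((real i - 2 * real l) * t) * (hh j t / 4) * (GG p t * sin t) = f l t" .
    qed
    finally show ?thesis .
  qed
  define A1 where "A1 l = cc i l * (real j + 3) * (real i + real j + 1 - 2 * real l)" for l
  define B1 where "B1 l = cc i l * (real j + 1) * (real i + real j + 3 - 2 * real l)" for l
  define A2 where "A2 l = cc i l * (real j + 3) * (real j + 1 - real i + 2 * real l)" for l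
  define B2 where "B2 l = cc i l * (real j + 1) * (real j + 3 - real i + 2 * real l)" for l
  have veq: "v l = pi / 16 * (((if k \<le> l then A1 l else 0) - (if k < l then B1 l else 0))
                  + ((if l \<le> i - k then A2 l else 0) - (if l < i - k then B2 l else 0)))" if li: "l \<le> i" for l
  proof -
    have P1: "Ph (q1 l) = (if k \<le> l then pi / 2 * (real i + real j + 1 - 2 * real l) else 0)"
    proof -
      have a: "q1 l \<le> p + 1 \<longleftrightarrow> k \<le> l" unfolding q1_def p_def using li ki ij by arith
      have b: "k \<le> l \<Longrightarrow> p + 1 - q1 l = 2 * (l - k)" unfolding q1_def p_def using li ki ij by arith
      have "(q1 l \<le> p + 1 \<and> even (p + 1 - q1 l)) = (k \<le> l)"
        proof (cases "k \<le> l")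
        case True
        have e: "even (p + 1 - q1 l)" unfolding b[OF True] by simp
        then show ?thesis using True a by simp
      next
        case False then show ?thesis using a by simp
      qed
      moreover have "real (q1 l) = real i + real j + 1 - 2 * real l" using li ij unfolding q1_def by (subst of_nat_diff) auto
      ultimately show ?thesis unfolding Ph_def by simp
    qed
    have P2: "Ph (q2 l) = (if l \<le> i - k then pi / 2 * (real j + 1 - real i + 2 * real l) else 0)"
    proof -
      have a: "q2 l \<le> p + 1 \<longleftrightarrow> l \<le> i - k" unfolding q2_def p_def using li ki ij by arith
      have b: "l \<le> i - k \<Longrightarrow> p + 1 - q2 l = 2 * (i - k - l)" unfolding q2_def p_def using li ki ij by arith
      have "(q2 l \<le> p + 1 \<and> even (p + 1 - q2 l)) = (l \<le> i - k)"
        proof (cases "l \<le> i - k")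
        case True
        have e: "even (p + 1 - q2 l)" unfolding b[OF True] by simp
        then show ?thesis using True a by simp
      next
        case False then show ?thesis using a by simp
      qed
      moreover have "real (q2 l) = real j + 1 - real i + 2 * real l" using li ij unfolding q2_def by (subst of_nat_diff) auto
      ultimately show ?thesis unfolding Ph_def by simp
    qed
    have P3: "Ph (q3 l) = (if k < l then pi / 2 * (real i + real j + 3 - 2 * real l) else 0)"
    proof -
      have a: "q3 l \<le> p + 1 \<longleftrightarrow> k < l" unfolding q3_def p_def using li ki ij by arith
      have b: "k < l \<Longrightarrow> p + 1 - q3 l = 2 * (l - k - 1)" unfolding q3_def p_def using li ki ij by arith
      have "(q3 l \<le> p + 1 \<and> even (p + 1 - q3 l)) = (k < l)"
        proof (cases "k < l")
        case True
        have e: "even (p + 1 - q3 l)" unfolding b[OF True] by simp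
        then show ?thesis using True a by simp
      next
        case False then show ?thesis using a by simp
      qed
      moreover have "real (q3 l) = real i + real j + 3 - 2 * real l" using li ij unfolding q3_def by (subst of_nat_diff) auto
      ultimately show ?thesis unfolding Ph_def by simp
    qed
    have P4: "Ph (q4 l) = (if l < i - k then pi / 2 * (real j + 3 - real i + 2 * real l) else 0)"
    proof -
      have a: "q4 l \<le> p + 1 \<longleftrightarrow> l < i - k" unfolding q4_def p_def using li ki ij by arith
      have b: "l < i - k \<Longrightarrow> p + 1 - q4 l = 2 * (i - k - l - 1)" unfolding q4_def p_def using li ki ij by arith
      have "(q4 l \<le> p + 1 \<and> even (p + 1 - q4 l)) = (l < i - k)"
        proof (cases "l < i - k")
        case True
        have e: "even (p + 1 - q4 l)" unfolding b[OF True] by simp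
        then show ?thesis using True a by simp
      next
        case False then show ?thesis using a by simp
      qed
      moreover have "real (q4 l) = real j + 3 - real i + 2 * real l" using li ij unfolding q4_def by (subst of_nat_diff) auto
      ultimately show ?thesis unfolding Ph_def by simp
    qed
    define e1 :: real where "e1 = (if k \<le> l then 1 else 0)"
    define e2 :: real where "e2 = (if l \<le> i - k then 1 else 0)"
    define e3 :: real where "e3 = (if k < l then 1 else 0)"
    define e4 :: real where "e4 = (if l < i - k then 1 else 0)"
    have Q1: "Ph (q1 l) = pi / 2 * (real i + real j + 1 - 2 * real l) * e1" unfolding P1 e1_def by simp
    have Q2: "Ph (q2 l) = pi / 2 * (real j + 1 - real i + 2 * real l) * e2" unfolding P2 e2_def by simp
    have Q3: "Ph (q3 l) = pi / 2 * (real i + real j + 3 - 2 * real l) * e3" unfolding P3 e3_def by simp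
    have Q4: "Ph (q4 l) = pi / 2 * (real j + 3 - real i + 2 * real l) * e4" unfolding P4 e4_def by simp
    have R1: "(if k \<le> l then A1 l else 0) = A1 l * e1" unfolding e1_def by simp
    have R2: "(if l \<le> i - k then A2 l else 0) = A2 l * e2" unfolding e2_def by simp
    have R3: "(if k < l then B1 l else 0) = B1 l * e3" unfolding e3_def by simp
    have R4: "(if l < i - k then B2 l else 0) = B2 l * e4" unfolding e4_def by simp
    show ?thesis unfolding v_def Q1 Q2 Q3 Q4 R1 R2 R3 R4 unfolding A1_def B1_def A2_def B2_def
      by (simp add: field_simps)
  qed
  have "(\<Sum>l\<le>i. v l) = pi / 16 * (((\<Sum>l\<le>i. if k \<le> l then A1 l else 0) - (\<Sum>l\<le>i. if k < l then B1 l else 0))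
          + ((\<Sum>l\<le>i. if l \<le> i - k then A2 l else 0) - (\<Sum>l\<le>i. if l < i - k then B2 l else 0)))"
  proof -
    have "(\<Sum>l\<le>i. v l) = (\<Sum>l\<le>i. pi / 16 * (((if k \<le> l then A1 l else 0) - (if k < l then B1 l else 0))
                  + ((if l \<le> i - k then A2 l else 0) - (if l < i - k then B2 l else 0))))"
      by (rule sum.cong) (auto simp: veq)
    also have "\<dots> = pi / 16 * (\<Sum>l\<le>i. (((if k \<le> l then A1 l else 0) - (if k < l then B1 l else 0))
                  + ((if l \<le> i - k then A2 l else 0) - (if l < i - k then B2 l else 0))))"
      by (rule sum_distrib_left[symmetric])
    also have "\<dots> = pi / 16 * (((\<Sum>l\<le>i. if k \<le> l then A1 l else 0) - (\<Sum>l\<le>i. if k < l then B1 l else 0))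
          + ((\<Sum>l\<le>i. if l \<le> i - k then A2 l else 0) - (\<Sum>l\<le>i. if l < i - k then B2 l else 0)))"
      by (simp only: sum.distrib sum_subtractf)
    finally show ?thesis .
  qed
  also have "\<dots> = pi / 8 * RR i j k"
    using T1_sum[OF ki, of j] T2_sum[OF ki, of j] unfolding A1_def B1_def A2_def B2_def by simp
  finally have vsum: "(\<Sum>l\<le>i. v l) = pi / 8 * RR i j k" .
  show ?thesis using sumI unfolding vsum feq[symmetric] p_def .
qed



lemma gb_rec: "(a gchoose Suc k) = (a gchoose k) * (a - of_nat k) / of_nat (Suc k)"
proof -
  have "of_nat (Suc k) * (a gchoose Suc k) = (a - of_nat k) * (a gchoose k)"
    using gbinomial_absorption[of k a] gbinomial_absorb_comp[of a k] by simp
  then show ?thesis by (simp add: field_simps del: of_nat_Suc)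
qed

lemma ghalf:
  "((real (s + r) + 1/2) gchoose s) * 4^s * fact (s + r + 1) * fact (2 * r + 2) * fact s
     = (fact (2 * s + 2 * r + 2) * fact (r + 1) :: real)"
proof (induction s arbitrary: r)
  case 0 then show ?case by simp
next
  case (Suc s r)
  let ?C = "(real (Suc s + r) + 1/2) gchoose s"
  have ih: "?C * 4^s * fact (s + r + 2) * fact (2 * r + 4) * fact s = (fact (2 * s + 2 * r + 4) * fact (r + 2) :: real)"
  proof -
    have e1: "s + (r + 1) + 1 = s + r + 2" "2 * (r + 1) + 2 = 2 * r + 4" "2 * s + 2 * (r + 1) + 2 = 2 * s + 2 * r + 4"
       "r + 1 + 1 = r + 2" by simp_all
    have e2: "real (s + (r + 1)) = real (Suc s + r)" by simp
    show ?thesis using Suc.IH[of "r + 1"] unfolding e1 e2 .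
  qed
  have f1: "fact (2 * r + 4) = (2 * real r + 4) * (2 * real r + 3) * (fact (2 * r+2) :: real)"
    by (simp add: fact_Suc numeral_eq_Suc algebra_simps)
  have f2: "fact (r + 2) = (real r + 2) * (fact (r+1) :: real)"
    by (simp add: fact_Suc numeral_eq_Suc algebra_simps)
  have X: "?C * 4^s * fact (s + r + 2) * fact s * (2 * (2 * real r + 3) * fact (2 * r+2)) = fact (2 * s + 2 * r + 4) * (fact (r + 1) :: real)"
  proof -
    have "?C * 4^s * fact (s + r + 2) * fact s * (2 * (2 * real r + 3) * fact (2 * r+2)) * (real r + 2)
        = ?C * 4^s * fact (s + r + 2) * fact (2 * r + 4) * fact s"
      unfolding f1 by (simp add: algebra_simps del: fact_Suc)
    also have "\<dots> = fact (2 * s + 2 * r + 4) * (fact (r + 1) :: real) * (real r + 2)"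
      unfolding ih f2 by (simp add: algebra_simps del: fact_Suc)
    finally show ?thesis by (simp del: fact_Suc)
  qed
  have g: "(real (Suc s + r) + 1/2) gchoose Suc s = ?C * (real r + 3/2) / (real s + 1)"
    unfolding gb_rec by (simp add: algebra_simps)
  have "((real (Suc s + r) + 1/2) gchoose Suc s) * 4 ^ Suc s * fact (Suc s + r + 1) * fact (2 * r + 2) * fact (Suc s)
      = ?C * 4^s * fact (s + r + 2) * fact s * (2 * (2 * real r + 3) * fact (2 * r+2))"
  proof -
    have "fact (Suc s + r + 1) = (fact (s + r + 2) :: real)" by (simp del: fact_Suc)
    moreover have "fact (Suc s) = (real s + 1) * (fact s :: real)" by simp
    ultimately show ?thesis unfolding g by (simp add: field_simps del: fact_Suc)
  qed
  also have "\<dots> = fact (2 * Suc s + 2 * r + 2) * fact (r + 1)"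
  proof -
    have e: "2 * Suc s + 2 * r + 2 = 2 * s + 2 * r + 4" by simp
    show ?thesis unfolding e using X .
  qed
  finally show ?case .
qed

definition beta :: "nat \<Rightarrow> real" where
  "beta N = fact (2 * N + 2) / (4^(N+1) * fact (N+1)^2)"

lemma ghalf_prod:
  assumes "N = s + r"
  shows "((real N + 1/2) gchoose r) * ((real N + 1/2) gchoose s) = beta N * real ((2 * N + 2) choose (2 * s + 1))"
proof -
  have a: "((real N + 1/2) gchoose s) = fact (2 * N + 2) * fact (r + 1) / (4^s * fact (N + 1) * fact (2 * r + 2) * fact s)"
    using ghalf[of s r] assms by (simp add: field_simps del: fact_Suc)
  have b: "((real N + 1/2) gchoose r) = fact (2 * N + 2) * fact (s + 1) / (4^r * fact (N + 1) * fact (2 * s + 2) * fact r)"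
    using ghalf[of r s] assms by (simp add: field_simps add.commute del: fact_Suc)
  have c: "real ((2 * N + 2) choose (2 * s + 1)) = fact (2 * N+2) / (fact (2 * s+1) * fact (2 * r+1))"
  proof -
    have "2 * N + 2 - (2 * s+1) = 2 * r + 1" using assms by simp
    then show ?thesis using binomial_fact[of "2 * s+1" "2 * N+2", where 'a=real] assms by simp
  qed
  have d1: "fact (r + 1) = (real r + 1) * (fact r :: real)" by simp
  have d2: "fact (s + 1) = (real s + 1) * (fact s :: real)" by simp
  have d3: "fact (2 * r + 2) = (2 * (real r + 1)) * (fact (2 * r+1) :: real)" by (simp add: algebra_simps)
  have d4: "fact (2 * s + 2) = (2 * (real s + 1)) * (fact (2 * s+1) :: real)" by (simp add: algebra_simps)
  have p: "(4::real)^r * 4^s * 4 = 4^(N+1)" using assms by (simp add: power_add)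
  have aux: "F * (y * fs) / (Q1 * A * ((2 * y) * fs1) * fr) * (F * (x * fr) / (Q2 * A * ((2 * x) * fr1) * fs))
      = F / (Q1 * Q2 * 4 * A^2) * (F / (fs1 * fr1))"
    if "fr \<noteq> 0" "fs \<noteq> 0" "fr1 \<noteq> 0" "fs1 \<noteq> 0" "A \<noteq> 0" "Q1 \<noteq> 0" "Q2 \<noteq> 0" "x \<noteq> 0" "y \<noteq> 0"
    for F A fr fs fr1 fs1 x y Q1 Q2 :: real
    using that by (simp add: field_simps power2_eq_square)
  have "((real N + 1/2) gchoose r) * ((real N + 1/2) gchoose s)
     = fact (2 * N + 2) / (4^r * 4^s * 4 * fact (N + 1)^2) * (fact (2 * N + 2) / (fact (2 * s + 1) * fact (2 * r + 1)))"
    unfolding a b d1 d2 d3 d4 by (rule aux) auto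
  then show ?thesis unfolding c beta_def p .
qed

lemma sum_even_odd:
  fixes n :: nat and g :: "nat \<Rightarrow> real"
  shows "(\<Sum>k<2 * n. g k) = (\<Sum>s<n. g (2 * s) + g (2 * s + 1))"
  by (induction n) (simp_all add: algebra_simps)

lemma sin_expand:
  "sin (real (2 * N+2) * p) = (\<Sum>s\<le>N. real ((2 * N+2) choose (2 * s+1)) * (-1)^s * sin p ^ (2 * s+1) * cos p ^ (2 * N+1-2 * s))"
proof -
  let ?M = "2 * N+2"
  have c: "cis p = complex_of_real (cos p) + \<i> * complex_of_real (sin p)"
    by (simp add: complex_eq_iff)
  have "sin (real ?M * p) = Im (cis p ^ ?M)" by (rule sin_n_Im_cis_pow_n)
  also have "cis p ^ ?M = (\<Sum>k\<le>?M. of_nat (?M choose k) * (\<i> * complex_of_real (sin p))^k * (complex_of_real (cos p))^(?M-k))"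
    unfolding c by (subst add.commute) (rule binomial_ring)
  also have "Im \<dots> = (\<Sum>k\<le>?M. real (?M choose k) * sin p ^ k * cos p ^ (?M - k) * Im (\<i> ^ k))"
  proof -
    have "Im (of_nat (?M choose k) * (\<i> * complex_of_real (sin p))^k * (complex_of_real (cos p))^(?M-k))
        = real (?M choose k) * sin p ^ k * cos p ^ (?M - k) * Im (\<i> ^ k)" for k
    proof -
      have h1: "(\<i> * complex_of_real (sin p))^k = complex_of_real (sin p ^ k) * \<i> ^ k"
        by (simp add: power_mult_distrib mult.commute)
      have "of_nat (?M choose k) * (\<i> * complex_of_real (sin p))^k * (complex_of_real (cos p))^(?M-k)
          = complex_of_real (real (?M choose k) * sin p ^ k * cos p ^ (?M - k)) * \<i> ^ k"
        unfolding h1 by (simp add: algebra_simps)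
      then show ?thesis by (simp only:) simp
    qed
    note hk = this
    have "Im (\<Sum>k\<le>?M. of_nat (?M choose k) * (\<i> * complex_of_real (sin p))^k * (complex_of_real (cos p))^(?M-k))
       = (\<Sum>k\<le>?M. Im (of_nat (?M choose k) * (\<i> * complex_of_real (sin p))^k * (complex_of_real (cos p))^(?M-k)))"
      by (rule Im_sum)
    also have "\<dots> = (\<Sum>k\<le>?M. real (?M choose k) * sin p ^ k * cos p ^ (?M - k) * Im (\<i> ^ k))"
      by (rule sum.cong[OF refl]) (rule hk)
    finally show ?thesis .
  qed
  also have "\<dots> = (\<Sum>k<2*(N+1). real (?M choose k) * sin p ^ k * cos p ^ (?M - k) * Im (\<i> ^ k))"
  proof -
    have "{..?M} = insert ?M {..<2*(N+1)}" by auto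
    moreover have "Im (\<i> ^ ?M) = 0"
      by (simp add: power_mult)
    ultimately show ?thesis by simp
  qed
  also have "\<dots> = (\<Sum>s<N+1. real (?M choose (2 * s+1)) * sin p ^ (2 * s+1) * cos p ^ (?M - (2 * s+1)) * (-1)^s)"
    unfolding sum_even_odd by (simp add: power_mult power_add)
  also have "\<dots> = (\<Sum>s\<le>N. real ((2 * N+2) choose (2 * s+1)) * (-1)^s * sin p ^ (2 * s+1) * cos p ^ (2 * N+1-2 * s))"
    by (rule sum.cong) (auto simp: algebra_simps)
  finally show ?thesis .
qed



lemma jac_half:
  "jacobiP N (1/2) (1/2) (cos t) * sin t = 2 * beta N * sin ((real N + 1) * t)"
proof -
  define p where "p = t / 2"
  have t: "t = 2 * p" unfolding p_def by simp
  have u: "(cos t - 1) / 2 = - ((sin p)^2)" unfolding t cos_double_sin by simp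
  have v: "(cos t + 1) / 2 = (cos p)^2" unfolding t cos_double_cos by simp
  have st: "sin t = 2 * sin p * cos p" unfolding t sin_double ..
  have trm: "((real N + 1/2) gchoose (N - s)) * ((real N + 1/2) gchoose s) * ((cos t - 1) / 2) ^ s * ((cos t + 1) / 2) ^ (N - s) * sin t
     = 2 * beta N * (real ((2 * N+2) choose (2 * s+1)) * (-1)^s * sin p ^ (2 * s+1) * cos p ^ (2 * N+1-2 * s))" if "s \<le> N" for s
  proof -
    have g: "((real N + 1/2) gchoose (N - s)) * ((real N + 1/2) gchoose s) = beta N * real ((2 * N+2) choose (2 * s+1))"
    proof -
      have "N = s + (N - s)" using that by simp
      from ghalf_prod[OF this] show ?thesis .
    qed
    have pw1: "(- ((sin p)^2)) ^ s * sin p = (-1)^s * sin p ^ (2 * s+1)"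
    proof -
      have "(- ((sin p)^2)) ^ s = ((-1) * (sin p)^2) ^ s" by simp
      also have "\<dots> = (-1)^s * ((sin p)^2)^s" by (rule power_mult_distrib)
      also have "\<dots> = (-1)^s * sin p ^ (2 * s)" by (simp add: power_mult)
      finally have "(- ((sin p)^2)) ^ s = (-1)^s * sin p ^ (2 * s)" .
      then show ?thesis by (simp add: power_add)
    qed
    have pw2: "((cos p)^2) ^ (N - s) * cos p = cos p ^ (2 * N+1-2 * s)"
    proof -
      have e: "2 * N+1-2 * s = 2 * (N-s) + 1" using that by simp
      have "((cos p)^2) ^ (N - s) = cos p ^ (2 * (N - s))" by (simp add: power_mult)
      then show ?thesis unfolding e by (simp add: power_add)
    qed
    have "((real N + 1/2) gchoose (N - s)) * ((real N + 1/2) gchoose s) * ((cos t - 1) / 2) ^ s * ((cos t + 1) / 2) ^ (N - s) * sin t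
       = 2 * (((real N + 1/2) gchoose (N - s)) * ((real N + 1/2) gchoose s)) * ((- ((sin p)^2)) ^ s * sin p) * (((cos p)^2) ^ (N - s) * cos p)"
      unfolding u v st by (simp add: algebra_simps)
    also have "\<dots> = 2 * beta N * (real ((2 * N+2) choose (2 * s+1)) * (-1)^s * sin p ^ (2 * s+1) * cos p ^ (2 * N+1-2 * s))"
      unfolding g pw1 pw2 by (simp add: algebra_simps)
    finally show ?thesis .
  qed
  have "jacobiP N (1/2) (1/2) (cos t) * sin t
      = (\<Sum>s\<le>N. ((real N + 1/2) gchoose (N - s)) * ((real N + 1/2) gchoose s) * ((cos t - 1) / 2) ^ s * ((cos t + 1) / 2) ^ (N - s) * sin t)"
    unfolding jacobiP_def sum_distrib_right ..
  also have "\<dots> = 2 * beta N * (\<Sum>s\<le>N. real ((2 * N+2) choose (2 * s+1)) * (-1)^s * sin p ^ (2 * s+1) * cos p ^ (2 * N+1-2 * s))"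
    unfolding sum_distrib_left by (rule sum.cong[OF refl], rule trm) simp
  also have "\<dots> = 2 * beta N * sin (real (2 * N+2) * p)" unfolding sin_expand ..
  also have "real (2 * N+2) * p = (real N + 1) * t" unfolding p_def by (simp add: algebra_simps)
  finally show ?thesis .
qed

lemma jac_deriv:
  "((\<lambda>x. jacobiP (Suc n) a b x) has_real_derivative ((real n + a + b + 2) / 2 * jacobiP n (a + 1) (b + 1) x)) (at x)"
proof -
  define A where "A = real (Suc n) + a"
  define B where "B = real (Suc n) + b"
  define al where "al s = (A gchoose (Suc n - s)) * (B gchoose s)" for s
  define u where "u = (x - 1) / 2"
  define v where "v = (x + 1) / 2"
  have jd: "jacobiP (Suc n) a b y = (\<Sum>s\<le>Suc n. al s * ((y - 1) / 2) ^ s * ((y + 1) / 2) ^ (Suc n - s))" for y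
    unfolding jacobiP_def al_def A_def B_def ..
  define D where "D s = al s * (real s * u ^ (s - 1) * (1/2) * v ^ (Suc n - s) + u ^ s * (real (Suc n - s) * v ^ (Suc n - s - 1) * (1/2)))" for s
  have td: "((\<lambda>y. al s * ((y - 1) / 2) ^ s * ((y + 1) / 2) ^ (Suc n - s)) has_real_derivative D s) (at x)" for s
    unfolding D_def u_def v_def
    by (auto intro!: derivative_eq_intros simp: algebra_simps)
  have d1: "((\<lambda>y. jacobiP (Suc n) a b y) has_real_derivative (\<Sum>s\<le>Suc n. D s)) (at x)"
    unfolding jd by (rule DERIV_sum) (rule td)
  have e1: "(\<Sum>s\<le>Suc n. al s * (real s * u ^ (s - 1) * (1/2) * v ^ (Suc n - s)))
      = (\<Sum>s\<le>n. al (Suc s) * real (Suc s) * u ^ s * v ^ (n - s)) / 2"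
    by (subst sum.atMost_Suc_shift) (simp add: sum_divide_distrib algebra_simps add_divide_distrib)
  have e2: "(\<Sum>s\<le>Suc n. al s * (u ^ s * (real (Suc n - s) * v ^ (Suc n - s - 1) * (1/2))))
      = (\<Sum>s\<le>n. al s * real (Suc n - s) * u ^ s * v ^ (n - s)) / 2"
    by (subst sum.atMost_Suc) (simp add: sum_divide_distrib algebra_simps Suc_diff_le add_divide_distrib diff_divide_distrib)
  have key: "al (Suc s) * real (Suc s) + al s * real (Suc n - s)
      = (real n + a + b + 2) * ((real n + (a + 1)) gchoose (n - s)) * ((real n + (b + 1)) gchoose s)" if "s \<le> n" for s
  proof -
    have A': "real n + (a + 1) = A" unfolding A_def by simp
    have B': "real n + (b + 1) = B" unfolding B_def by simp
    have h1: "(B gchoose Suc s) * real (Suc s) = (B gchoose s) * (B - real s)"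
      using gb_rec[of B s] by simp
    have h2: "(A gchoose (Suc n - s)) * real (Suc n - s) = (A gchoose (n - s)) * (A - real (n - s))"
    proof -
      have "Suc n - s = Suc (n - s)" using that by simp
      then show ?thesis using gb_rec[of A "n - s"] by simp
    qed
    have s1: "Suc n - Suc s = n - s" by simp
    have "al (Suc s) * real (Suc s) + al s * real (Suc n - s)
       = (A gchoose (n - s)) * ((B gchoose Suc s) * real (Suc s)) + ((A gchoose (Suc n - s)) * real (Suc n - s)) * (B gchoose s)"
      unfolding al_def s1 by (simp add: algebra_simps)
    also have "\<dots> = (A gchoose (n - s)) * (B gchoose s) * ((B - real s) + (A - real (n - s)))"
      unfolding h1 h2 by (simp add: algebra_simps)
    also have "(B - real s) + (A - real (n - s)) = real n + a + b + 2"
      unfolding A_def B_def using that by (simp add: of_nat_diff)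
    finally show ?thesis unfolding A' B' by (simp add: algebra_simps)
  qed
  have "(\<Sum>s\<le>Suc n. D s) = (\<Sum>s\<le>n. (al (Suc s) * real (Suc s) + al s * real (Suc n - s)) * u ^ s * v ^ (n - s)) / 2"
    unfolding D_def distrib_left sum.distrib e1 e2 by (simp add: sum.distrib[symmetric] algebra_simps add_divide_distrib)
  also have "\<dots> = (\<Sum>s\<le>n. (real n + a + b + 2) * ((real n + (a + 1)) gchoose (n - s)) * ((real n + (b + 1)) gchoose s) * u ^ s * v ^ (n - s)) / 2"
    by (rule arg_cong[where f="\<lambda>z. z / 2"], rule sum.cong[OF refl], subst key) auto
  also have "\<dots> = (real n + a + b + 2) / 2 * (\<Sum>s\<le>n. ((real n + (a + 1)) gchoose (n - s)) * ((real n + (b + 1)) gchoose s) * u ^ s * v ^ (n - s))"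
    unfolding sum_distrib_left sum_divide_distrib by (rule sum.cong) (simp_all add: algebra_simps)
  also have "\<dots> = (real n + a + b + 2) / 2 * jacobiP n (a + 1) (b + 1) x"
    unfolding jacobiP_def u_def v_def ..
  finally have Dsum: "(\<Sum>s\<le>Suc n. D s) = (real n + a + b + 2) / 2 * jacobiP n (a + 1) (b + 1) x" .
  show ?thesis using d1 unfolding Dsum .
qed



lemma trig_m: "2 * (sin ((real n + 2) * t) * cos t - (real n + 2) * cos ((real n + 2) * t) * sin t) = hh n t"
proof -
  let ?m = "(real n + 2) * t"
  have a: "sin ((real n + 1) * t) = sin (?m - t)" by (simp add: algebra_simps)
  have b: "sin ((real n + 3) * t) = sin (?m + t)" by (simp add: algebra_simps)
  show ?thesis unfolding hh_def a b sin_add sin_diff by (simp add: algebra_simps)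
qed

lemma jac32: "jacobiP n (3/2) (3/2) (cos t) * (sin t)^3 = 2 * beta (Suc n) / (real n + 3) * hh n t"
proof -
  define g where "g x = jacobiP (Suc n) (1/2) (1/2) x" for x
  define J where "J x = jacobiP n (3/2) (3/2) x" for x
  define be where "be = beta (Suc n)"
  have gd: "(g has_real_derivative ((real n + 3) / 2 * J x)) (at x)" for x
  proof -
    have "((\<lambda>x. jacobiP (Suc n) (1/2) (1/2) x) has_real_derivative ((real n + 1/2 + 1/2 + 2) / 2 * jacobiP n (1/2 + 1) (1/2 + 1) x)) (at x)"
      by (rule jac_deriv)
    moreover have "(real n + 1/2 + 1/2 + 2) / 2 * jacobiP n (1/2 + 1) (1/2 + 1) x = (real n + 3) / 2 * J x"
      unfolding J_def by (simp add: algebra_simps)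
    ultimately show ?thesis unfolding g_def[abs_def] by simp
  qed
  have feq: "(\<lambda>s. g (cos s) * sin s) = (\<lambda>s. 2 * be * sin ((real n + 2) * s))"
  proof
    fix s
    have "g (cos s) * sin s = 2 * beta (Suc n) * sin ((real (Suc n) + 1) * s)" unfolding g_def by (rule jac_half)
    then show "g (cos s) * sin s = 2 * be * sin ((real n + 2) * s)" unfolding be_def by (simp add: add.commute add.left_commute)
  qed
  have d1: "((\<lambda>s. g (cos s) * sin s) has_real_derivative
      ((real n + 3) / 2 * J (cos t) * (- sin t)) * sin t + cos t * g (cos t)) (at t)"
    by (rule DERIV_mult[OF DERIV_chain2[OF gd DERIV_cos] DERIV_sin])
  have d2: "((\<lambda>s. 2 * be * sin ((real n + 2) * s)) has_real_derivative (2 * be * (cos ((real n + 2) * t) * (real n + 2)))) (at t)"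
    by (auto intro!: derivative_eq_intros)
  have E: "((real n + 3) / 2 * J (cos t) * (- sin t)) * sin t + cos t * g (cos t) = 2 * be * (cos ((real n + 2) * t) * (real n + 2))"
    using DERIV_unique[OF d1[unfolded feq] d2] .
  have G: "g (cos t) * sin t = 2 * be * sin ((real n + 2) * t)" using fun_cong[OF feq, of t] by simp
  have "(real n + 3) / 2 * (J (cos t) * (sin t)^3)
      = cos t * (g (cos t) * sin t) - (((real n + 3) / 2 * J (cos t) * (- sin t)) * sin t + cos t * g (cos t)) * sin t"
    by (simp add: field_simps power3_eq_cube)
  also have "\<dots> = cos t * (g (cos t) * sin t) - 2 * be * (cos ((real n + 2) * t) * (real n + 2)) * sin t"
    unfolding E ..
  also have "\<dots> = be * (2 * (sin ((real n + 2) * t) * cos t - (real n + 2) * cos ((real n + 2) * t) * sin t))"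
    unfolding G by (simp add: algebra_simps)
  also have "\<dots> = be * hh n t" unfolding trig_m ..
  finally have "(real n + 3) / 2 * (J (cos t) * (sin t)^3) = be * hh n t" .
  then show ?thesis unfolding J_def be_def by (simp add: field_simps)
qed

lemma jac32_GG:
  assumes "sin t \<noteq> 0"
  shows "jacobiP n (3/2) (3/2) (cos t) = 8 * beta (Suc n) / (real n + 3) * GG n t"
proof -
  have "jacobiP n (3/2) (3/2) (cos t) * (sin t)^3 = (8 * beta (Suc n) / (real n + 3) * GG n t) * (sin t)^3"
    unfolding jac32 GG_hh[where n=n and t=t, symmetric] by (simp add: algebra_simps)
  moreover have nz: "sin t ^ 3 \<noteq> 0" using assms by simp
  ultimately show ?thesis unfolding mult_right_cancel[OF nz] by blast
qed

lemma gh_alg: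
  fixes z F Fk W sp :: real
  assumes "z \<ge> 0" "Fk > 0" "W > 0"
  shows "(z + 1/2) * (F * sp / (W * Fk)) = (2 * z + 2) * (2 * z + 1) * F * sp / (4 * W * ((z + 1) * Fk))"
proof -
  have nz: "z + 1 \<noteq> 0" using assms by simp
  have "(2 * z + 2) * (2 * z + 1) * F * sp / (4 * W * ((z + 1) * Fk)) = ((z + 1) * ((2 * z + 1) * F * sp * 2)) / ((z + 1) * (4 * W * Fk))"
    by (simp add: algebra_simps)
  also have "\<dots> = ((2 * z + 1) * F * sp * 2) / (4 * W * Fk)" by (rule mult_divide_mult_cancel_left[OF nz])
  also have "\<dots> = (z + 1/2) * (F * sp / (W * Fk))" using assms by (simp add: field_simps)
  finally show ?thesis ..
qed

lemma Gamma_half: "Gamma (real k + 1/2) = fact (2 * k) * sqrt pi / (4^k * fact k)"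
proof (induction k)
  case 0 then show ?case by (simp add: Gamma_one_half_real)
next
  case (Suc k)
  have nz: "real k + 1/2 \<notin> \<int>\<^sub>\<le>\<^sub>0" by (auto dest: nonpos_Ints_nonpos)
  have "Gamma (real (Suc k) + 1/2) = Gamma ((real k + 1/2) + 1)" by (simp add: algebra_simps)
  also have "\<dots> = (real k + 1/2) * Gamma (real k + 1/2)" by (rule Gamma_plus1[OF nz])
  also have "\<dots> = (real k + 1/2) * (fact (2 * k) * sqrt pi / (4^k * fact k))" unfolding Suc.IH ..
  also have "\<dots> = fact (2 * Suc k) * sqrt pi / (4^Suc k * fact (Suc k))"
  proof -
    have h1: "fact (2 * Suc k) = (2 * real k + 2) * (2 * real k + 1) * (fact (2 * k) :: real)"
      by (simp add: algebra_simps)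
    have h2: "fact (Suc k) = (real k + 1) * (fact k :: real)" by simp
    show ?thesis unfolding h1 h2 power_Suc by (rule gh_alg) auto
  qed
  finally show ?case .
qed

lemma kap_alg:
  fixes Q F W a b c sq s2 sp :: real
  assumes "Q > 0" "F > 0" "W > 0" "a > 0" "b > 0" "c > 0" "sq > 0" "sq * sq = a * b" "s2 * s2 = 2" "s2 > 0" "sp > 0"
  shows "Q * c * sq / (2 * s2 * (F * sp / (W * (c * (a * Q))))) * (8 * (F / (W * (c * (a * Q))^2)) / b)
      = 2 * (s2 / sp) / sq"
proof -
  have "Q * c * sq / (2 * s2 * (F * sp / (W * (c * (a * Q))))) * (8 * (F / (W * (c * (a * Q))^2)) / b)
      = 4 * sq / (s2 * sp * (a * b))"
    using assms by (simp add: field_simps power2_eq_square)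
  also have "\<dots> = 4 / (s2 * sp * sq)" unfolding assms(8)[symmetric] using assms by (simp add: field_simps)
  also have "\<dots> = 2 * (s2 * s2) / (s2 * sp * sq)" unfolding assms(9) by simp
  also have "\<dots> = 2 * (s2 / sp) / sq" using assms by (simp add: field_simps)
  finally show ?thesis .
qed

definition kap :: "nat \<Rightarrow> real" where
  "kap n = 2 * sqrt (2 / pi) / sqrt ((real n + 1) * (real n + 3))"

lemma kap_eq: "frakN n * (8 * beta (Suc n) / (real n + 3)) = kap n"
proof -
  define F :: real where "F = fact (2 * n + 4)"
  define P :: real where "P = fact (n + 2)"
  have g1: "Gamma (1 + real n) = fact n" using Gamma_fact[of n] by simp
  have g4: "Gamma (4 + real n) = fact (n + 3)" using Gamma_fact[of "n + 3"] by (simp add: add.commute)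
  have g5: "Gamma (5/2 + real n) = F * sqrt pi / (4^(n+2) * P)"
  proof -
    have e: "5/2 + real n = real (n + 2) + 1/2" by simp
    have e2: "2 * (n + 2) = 2 * n + 4" by simp
    show ?thesis unfolding e Gamma_half e2 F_def P_def ..
  qed
  have bz: "beta (Suc n) = F / (4^(n+2) * P^2)"
  proof -
    have e: "2 * Suc n + 2 = 2 * n + 4" "Suc n + 1 = n + 2" by simp_all
    show ?thesis unfolding beta_def e F_def P_def ..
  qed
  have f3: "fact (n + 3) = (real n + 3) * (real n + 2) * (real n + 1) * (fact n :: real)"
    by (simp add: numeral_eq_Suc algebra_simps)
  have f2: "P = (real n + 2) * ((real n + 1) * (fact n :: real))"
    unfolding P_def by (simp add: numeral_eq_Suc algebra_simps)
  have sq: "sqrt ((real n + 2) * fact n * fact (n + 3)) = fact n * (real n + 2) * sqrt ((real n + 1) * (real n + 3))"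
  proof -
    have "(real n + 2) * fact n * fact (n + 3) = (fact n * (real n + 2))^2 * ((real n + 1) * (real n + 3))"
      unfolding f3 by (simp add: power2_eq_square algebra_simps)
    then show ?thesis by (simp add: real_sqrt_mult)
  qed
  have s2: "sqrt (2 / pi) = sqrt 2 / sqrt pi" by (simp add: real_sqrt_divide)
  have "frakN n * (8 * beta (Suc n) / (real n + 3))
      = fact n * (real n + 2) * sqrt ((real n + 1) * (real n + 3)) / (2 * sqrt 2 * (F * sqrt pi / (4^(n+2) * ((real n + 2) * ((real n + 1) * fact n)))))
        * (8 * (F / (4^(n+2) * ((real n + 2) * ((real n + 1) * fact n))^2)) / (real n + 3))"
    unfolding frakN_def g1 g4 g5 sq bz f2 ..
  also have "\<dots> = 2 * (sqrt 2 / sqrt pi) / sqrt ((real n + 1) * (real n + 3))"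
    by (rule kap_alg) (auto simp: F_def real_sqrt_mult[symmetric])
  also have "\<dots> = kap n" unfolding kap_def s2 ..
  finally show ?thesis .
qed

lemma frake_GG: "sin t \<noteq> 0 \<Longrightarrow> frake n t = kap n * GG n t"
  unfolding frake_def jac32_GG kap_eq[symmetric] by simp



lemma Cbar_from:
  assumes "((\<lambda>t. GG a t * GG b t * GG c t * (sin t)^4) has_integral I) {0..pi}"
  shows "Cbar a b c = kap a * kap b * kap c * I"
proof -
  have h: "((\<lambda>t. kap a * kap b * kap c * (GG a t * GG b t * GG c t * (sin t)^4)) has_integral (kap a * kap b * kap c * I)) {0..pi}"
    by (rule has_integral_mult_right[OF assms])
  have "((\<lambda>t. frake a t * frake b t * frake c t * (sin t)^4) has_integral (kap a * kap b * kap c * I)) {0..pi}"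
  proof (rule has_integral_spike_finite[OF _ _ h])
    show "finite {0, pi}" by simp
    fix t assume "t \<in> {0..pi} - {0, pi}"
    then have "0 < t" "t < pi" by auto
    then have "sin t \<noteq> 0" using sin_gt_zero by force
    then show "frake a t * frake b t * frake c t * (sin t)^4 = kap a * kap b * kap c * (GG a t * GG b t * GG c t * (sin t)^4)"
      by (simp add: frake_GG algebra_simps)
  qed
  then show ?thesis unfolding Cbar_def by (rule integral_unique)
qed

lemma c0sq: "sqrt (2 / pi) * sqrt (2 / pi) = 2 / pi"
  by (simp add: pi_gt_zero less_imp_le)

lemma alg1:
  fixes c0 q sq s R :: real
  assumes "c0 * c0 = 2 / pi" "sq * sq = q" "sq > 0" "s > 0"
  shows "(2 * c0 / sq) * (2 * c0 / sq) * (2 * c0 / s) * (pi / 8 * R) = 2 * c0 * R / (q * s)"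
proof -
  have "(2 * c0 / sq) * (2 * c0 / sq) * (2 * c0 / s) * (pi / 8 * R) = (c0 * c0) * pi * (c0 * R) / ((sq * sq) * s)"
    by (simp add: field_simps)
  also have "\<dots> = 2 * c0 * R / (q * s)" unfolding assms(1,2) using pi_gt_zero by simp
  finally show ?thesis .
qed

lemma alg3:
  fixes c0 a b c R :: real
  assumes "c0 * c0 = 2 / pi" "a > 0" "b > 0" "c > 0"
  shows "(2 * c0 / a) * (2 * c0 / b) * (2 * c0 / c) * (pi / 8 * R) = 2 * c0 * R / (a * b * c)"
proof -
  have "(2 * c0 / a) * (2 * c0 / b) * (2 * c0 / c) * (pi / 8 * R) = (c0 * c0) * pi * (c0 * R) / (a * b * c)"
    by (simp add: field_simps)
  also have "\<dots> = 2 * c0 * R / (a * b * c)" unfolding assms(1) using pi_gt_zero by simp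
  finally show ?thesis .
qed

theorem lemma5p9:
  fixes \<gamma> \<tau> m :: nat
  assumes "\<tau> \<le> \<gamma>" and "m \<ge> 2 * \<gamma> + 1"
  shows "(Cbar \<gamma> \<gamma> (2 * \<tau>) =
           2 * sqrt (2 / pi) * ((real \<tau> + 1)^2 * (real \<gamma> - real \<tau> + 1) * (real \<gamma> + real \<tau> + 3))
           / ((real \<gamma> + 1) * (real \<gamma> + 3) * sqrt (4 * real \<tau> * (real \<tau> + 2) + 3))) \<and>
         (Cbar m (2 * \<tau>) m =
           2 * sqrt (2 / pi) * ((real \<tau> + 1)^2 * (real m - real \<tau> + 1) * (real m + real \<tau> + 3))
           / ((real m + 1) * (real m + 3) * sqrt (4 * real \<tau> * (real \<tau> + 2) + 3))) \<and>
         (Cbar \<gamma> (2 * \<tau> + m - \<gamma>) m =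
           2 * sqrt (2 / pi) * ((real \<tau> + 1) * (real \<gamma> - real \<tau> + 1) * (real m + real \<tau> + 3)
                                * (- real \<gamma> + real m + real \<tau> + 1))
           / sqrt ((real \<gamma> + 1) * (real \<gamma> + 3) * (real m + 1) * (real m + 3)
                   * (- real \<gamma> + real m + 2 * real \<tau> + 1) * (- real \<gamma> + real m + 2 * real \<tau> + 3)))"
proof (intro conjI)
  let ?c0 = "sqrt (2 / pi)"
  have tg: "\<tau> \<le> \<gamma>" using assms by simp
  have kapd: "kap n = 2 * ?c0 / sqrt ((real n + 1) * (real n + 3))" for n unfolding kap_def ..
  have q2t: "(real (2 * \<tau>) + 1) * (real (2 * \<tau>) + 3) = 4 * real \<tau> * (real \<tau> + 2) + 3"
    by (simp add: algebra_simps)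
  have sqq: "sqrt ((real n + 1) * (real n + 3)) * sqrt ((real n + 1) * (real n + 3)) = (real n + 1) * (real n + 3)" for n
    by simp
  show "Cbar \<gamma> \<gamma> (2 * \<tau>) =
           2 * sqrt (2 / pi) * ((real \<tau> + 1)^2 * (real \<gamma> - real \<tau> + 1) * (real \<gamma> + real \<tau> + 3))
           / ((real \<gamma> + 1) * (real \<gamma> + 3) * sqrt (4 * real \<tau> * (real \<tau> + 2) + 3))"
  proof -
    have e: "\<gamma> + \<gamma> - 2 * (\<gamma> - \<tau>) = 2 * \<tau>" using tg by simp
    have I: "((\<lambda>t. GG \<gamma> t * GG \<gamma> t * GG (2 * \<tau>) t * (sin t)^4) has_integral (pi / 8 * RR \<gamma> \<gamma> (\<gamma> - \<tau>))) {0..pi}"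
      using main_integral[of \<gamma> \<gamma> "\<gamma> - \<tau>"] unfolding e by simp
    have R: "RR \<gamma> \<gamma> (\<gamma> - \<tau>) = (real \<tau> + 1)^2 * (real \<gamma> - real \<tau> + 1) * (real \<gamma> + real \<tau> + 3)"
      unfolding RR_def using tg by (simp add: of_nat_diff power2_eq_square algebra_simps)
    have "Cbar \<gamma> \<gamma> (2 * \<tau>) = kap \<gamma> * kap \<gamma> * kap (2 * \<tau>) * (pi / 8 * RR \<gamma> \<gamma> (\<gamma> - \<tau>))"
      by (rule Cbar_from[OF I])
    also have "\<dots> = 2 * ?c0 * RR \<gamma> \<gamma> (\<gamma> - \<tau>) / (((real \<gamma> + 1) * (real \<gamma> + 3)) * sqrt ((real (2 * \<tau>) + 1) * (real (2 * \<tau>) + 3)))"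
      unfolding kapd by (rule alg1[OF c0sq sqq]) auto
    finally show ?thesis unfolding R q2t .
  qed
  show "Cbar m (2 * \<tau>) m =
           2 * sqrt (2 / pi) * ((real \<tau> + 1)^2 * (real m - real \<tau> + 1) * (real m + real \<tau> + 3))
           / ((real m + 1) * (real m + 3) * sqrt (4 * real \<tau> * (real \<tau> + 2) + 3))"
  proof -
    have tm: "2 * \<tau> \<le> m" "\<tau> \<le> 2 * \<tau>" using assms by auto
    have e: "2 * \<tau> + m - 2 * \<tau> = m" by simp
    have I0: "((\<lambda>t. GG (2 * \<tau>) t * GG m t * GG m t * (sin t)^4) has_integral (pi / 8 * RR (2 * \<tau>) m \<tau>)) {0..pi}"
      using main_integral[OF tm] unfolding e .
    have I: "((\<lambda>t. GG m t * GG (2 * \<tau>) t * GG m t * (sin t)^4) has_integral (pi / 8 * RR (2 * \<tau>) m \<tau>)) {0..pi}"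
      using I0 by (simp add: mult.commute mult.left_commute)
    have R: "RR (2 * \<tau>) m \<tau> = (real \<tau> + 1)^2 * (real m - real \<tau> + 1) * (real m + real \<tau> + 3)"
      unfolding RR_def by (simp add: power2_eq_square algebra_simps)
    have "Cbar m (2 * \<tau>) m = kap m * kap (2 * \<tau>) * kap m * (pi / 8 * RR (2 * \<tau>) m \<tau>)"
      by (rule Cbar_from[OF I])
    also have "\<dots> = kap m * kap m * kap (2 * \<tau>) * (pi / 8 * RR (2 * \<tau>) m \<tau>)" by (simp add: algebra_simps)
    also have "\<dots> = 2 * ?c0 * RR (2 * \<tau>) m \<tau> / (((real m + 1) * (real m + 3)) * sqrt ((real (2 * \<tau>) + 1) * (real (2 * \<tau>) + 3)))"
      unfolding kapd by (rule alg1[OF c0sq sqq]) auto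
    finally show ?thesis unfolding R q2t .
  qed
  show "Cbar \<gamma> (2 * \<tau> + m - \<gamma>) m =
           2 * sqrt (2 / pi) * ((real \<tau> + 1) * (real \<gamma> - real \<tau> + 1) * (real m + real \<tau> + 3)
                                * (- real \<gamma> + real m + real \<tau> + 1))
           / sqrt ((real \<gamma> + 1) * (real \<gamma> + 3) * (real m + 1) * (real m + 3)
                   * (- real \<gamma> + real m + 2 * real \<tau> + 1) * (- real \<gamma> + real m + 2 * real \<tau> + 3))"
  proof -
    let ?j = "2 * \<tau> + m - \<gamma>"
    have gm: "\<gamma> \<le> m" "\<gamma> - \<tau> \<le> \<gamma>" using assms by auto
    have e: "\<gamma> + m - 2 * (\<gamma> - \<tau>) = ?j" using assms by simp
    have I0: "((\<lambda>t. GG \<gamma> t * GG m t * GG ?j t * (sin t)^4) has_integral (pi / 8 * RR \<gamma> m (\<gamma> - \<tau>))) {0..pi}"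
      using main_integral[OF gm] unfolding e .
    have I: "((\<lambda>t. GG \<gamma> t * GG ?j t * GG m t * (sin t)^4) has_integral (pi / 8 * RR \<gamma> m (\<gamma> - \<tau>))) {0..pi}"
    proof -
      have "(\<lambda>t. GG \<gamma> t * GG ?j t * GG m t * (sin t)^4) = (\<lambda>t. GG \<gamma> t * GG m t * GG ?j t * (sin t)^4)"
        by (rule ext) (simp only: ac_simps)
      then show ?thesis using I0 by simp
    qed
    have rj: "real ?j = 2 * real \<tau> + real m - real \<gamma>" using assms by (simp add: of_nat_diff)
    have R: "RR \<gamma> m (\<gamma> - \<tau>) = (real \<tau> + 1) * (real \<gamma> - real \<tau> + 1) * (real m + real \<tau> + 3) * (- real \<gamma> + real m + real \<tau> + 1)"
      unfolding RR_def using tg by (simp add: of_nat_diff algebra_simps)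
    have "Cbar \<gamma> ?j m = kap \<gamma> * kap ?j * kap m * (pi / 8 * RR \<gamma> m (\<gamma> - \<tau>))"
      by (rule Cbar_from[OF I])
    also have "\<dots> = 2 * ?c0 * RR \<gamma> m (\<gamma> - \<tau>) / (sqrt ((real \<gamma> + 1) * (real \<gamma> + 3)) * sqrt ((real ?j + 1) * (real ?j + 3)) * sqrt ((real m + 1) * (real m + 3)))"
      unfolding kapd by (rule alg3[OF c0sq]) auto
    also have "sqrt ((real \<gamma> + 1) * (real \<gamma> + 3)) * sqrt ((real ?j + 1) * (real ?j + 3)) * sqrt ((real m + 1) * (real m + 3))
       = sqrt ((real \<gamma> + 1) * (real \<gamma> + 3) * (real m + 1) * (real m + 3)
                   * (- real \<gamma> + real m + 2 * real \<tau> + 1) * (- real \<gamma> + real m + 2 * real \<tau> + 3))"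
      unfolding rj real_sqrt_mult[symmetric] by (simp add: algebra_simps)
    finally show ?thesis unfolding R .
  qed
qed


end
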